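(* Let $\gamma$ be an abstract graph and $\gamma'$ a subgraph of $\gamma$ such that every automorphism of $\gamma$ maps $\gamma'$ to itself setwise. Let $\Gamma$ be an embedding of $\gamma$ in $S^3$ and $\Gamma'$ the embedding of $\gamma'$ induced by $\Gamma$. Then ${\mathrm{TSG}}(\Gamma)\leq{\mathrm{TSG}}(\Gamma')$ and ${\mathrm{TSG}}_+(\Gamma)\leq{\mathrm{TSG}}_+(\Gamma')$.
   Context: An embedding of a finite graph $\gamma$ in $S^3$ places the vertices at distinct points and the edges as arcs that meet only at common endpoints; its image $\Gamma$ is a spatial graph. A homeomorphism $h$ of $S^3$ with $h(\Gamma)=\Gamma$ induces an automorphism of $\gamma$. The topological symmetry group ${\mathrm{TSG}}(\Gamma)$ is the subgroup of ${\mathrm{Aut}}(\gamma)$ of automorphisms induced by homeomorphisms of $(S^3,\Gamma)$; ${\mathrm{TSG}}_+(\Gamma)$ is the subgroup induced by orientation-preserving homeomorphisms. In the statement, an automorphism of $\gamma$ induced by a homeomorphism of $(S^3,\Gamma)$ is regarded, via that same homeomorphism (which preserves $\Gamma'$), as an automorphism of $\gamma'$. *)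

theory Defs
  imports "HOL-Analysis.Analysis" "HOL-Homology.Homology"
begin

text \<open>S^3 is the unit sphere nsphere 3 in R^4 (points of type nat => real).
 A finite simple graph is given by a vertex set V and an edge set E of 2-element subsets of V.\<close>

abbreviation S3 :: "(nat \<Rightarrow> real) topology" where "S3 \<equiv> nsphere 3"

definition finite_graph :: "'v set \<Rightarrow> 'v set set \<Rightarrow> bool" where
  "finite_graph V E \<longleftrightarrow> finite V \<and> (\<forall>e\<in>E. e \<subseteq> V \<and> card e = 2)"

definition subgraph :: "'v set \<Rightarrow> 'v set set \<Rightarrow> 'v set \<Rightarrow> 'v set set \<Rightarrow> bool" where
  "subgraph V' E' V E \<longleftrightarrow> V' \<subseteq> V \<and> E' \<subseteq> E \<and> (\<forall>e\<in>E'. e \<subseteq> V')"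

definition graph_aut :: "'v set \<Rightarrow> 'v set set \<Rightarrow> ('v \<Rightarrow> 'v) \<Rightarrow> bool" where
  "graph_aut V E \<phi> \<longleftrightarrow> bij_betw \<phi> V V \<and> (\<forall>x. x \<notin> V \<longrightarrow> \<phi> x = x)
     \<and> (\<forall>e. e \<subseteq> V \<longrightarrow> (\<phi> ` e \<in> E \<longleftrightarrow> e \<in> E))"

definition arc_in :: "(real \<Rightarrow> nat \<Rightarrow> real) \<Rightarrow> bool" where
  "arc_in g \<longleftrightarrow> pathin S3 g \<and> inj_on g {0..1}"

definition arc_img :: "(real \<Rightarrow> nat \<Rightarrow> real) \<Rightarrow> (nat \<Rightarrow> real) set" where
  "arc_img g = g ` {0..1}"

definition spatial_embedding ::
  "'v set \<Rightarrow> 'v set set \<Rightarrow> ('v \<Rightarrow> nat \<Rightarrow> real) \<Rightarrow> ('v set \<Rightarrow> real \<Rightarrow> nat \<Rightarrow> real) \<Rightarrow> bool" where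
  "spatial_embedding V E pos ar \<longleftrightarrow>
     inj_on pos V \<and> pos ` V \<subseteq> topspace S3
   \<and> (\<forall>e\<in>E. arc_in (ar e) \<and> {ar e 0, ar e 1} = pos ` e
            \<and> arc_img (ar e) \<inter> pos ` V = pos ` e)
   \<and> (\<forall>e\<in>E. \<forall>e'\<in>E. e \<noteq> e' \<longrightarrow> arc_img (ar e) \<inter> arc_img (ar e') = pos ` (e \<inter> e'))"

definition spatial_image ::
  "'v set \<Rightarrow> 'v set set \<Rightarrow> ('v \<Rightarrow> nat \<Rightarrow> real) \<Rightarrow> ('v set \<Rightarrow> real \<Rightarrow> nat \<Rightarrow> real) \<Rightarrow> (nat \<Rightarrow> real) set" where
  "spatial_image V E pos ar = pos ` V \<union> (\<Union>e\<in>E. arc_img (ar e))"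

definition induces_aut ::
  "'v set \<Rightarrow> 'v set set \<Rightarrow> ('v \<Rightarrow> nat \<Rightarrow> real) \<Rightarrow> ('v set \<Rightarrow> real \<Rightarrow> nat \<Rightarrow> real)
   \<Rightarrow> ((nat \<Rightarrow> real) \<Rightarrow> nat \<Rightarrow> real) \<Rightarrow> ('v \<Rightarrow> 'v) \<Rightarrow> bool" where
  "induces_aut V E pos ar h \<phi> \<longleftrightarrow> graph_aut V E \<phi>
     \<and> (\<forall>v\<in>V. h (pos v) = pos (\<phi> v))
     \<and> (\<forall>e\<in>E. h ` arc_img (ar e) = arc_img (ar (\<phi> ` e)))"

definition TSG ::
  "'v set \<Rightarrow> 'v set set \<Rightarrow> ('v \<Rightarrow> nat \<Rightarrow> real) \<Rightarrow> ('v set \<Rightarrow> real \<Rightarrow> nat \<Rightarrow> real) \<Rightarrow> ('v \<Rightarrow> 'v) set" where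
  "TSG V E pos ar = {\<phi>. \<exists>h. homeomorphic_map S3 S3 h
       \<and> h ` spatial_image V E pos ar = spatial_image V E pos ar
       \<and> induces_aut V E pos ar h \<phi>}"

text \<open>Orientation-preserving: Brouwer degree 1 on S^3.\<close>
definition TSG_plus ::
  "'v set \<Rightarrow> 'v set set \<Rightarrow> ('v \<Rightarrow> nat \<Rightarrow> real) \<Rightarrow> ('v set \<Rightarrow> real \<Rightarrow> nat \<Rightarrow> real) \<Rightarrow> ('v \<Rightarrow> 'v) set" where
  "TSG_plus V E pos ar = {\<phi>. \<exists>h. homeomorphic_map S3 S3 h \<and> Brouwer_degree2 3 h = 1
       \<and> h ` spatial_image V E pos ar = spatial_image V E pos ar
       \<and> induces_aut V E pos ar h \<phi>}"

definition restr_aut :: "'v set \<Rightarrow> ('v \<Rightarrow> 'v) \<Rightarrow> 'v \<Rightarrow> 'v" where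
  "restr_aut V' \<phi> = (\<lambda>x. if x \<in> V' then \<phi> x else x)"

end

theory Submission
  imports Defs
begin

lemma key:
  assumes sub: "subgraph V' E' V E"
    and inv: "\<forall>\<phi>. graph_aut V E \<phi> \<longrightarrow> \<phi> ` V' = V' \<and> (\<lambda>e. \<phi> ` e) ` E' = E'"
    and ind: "induces_aut V E pos ar h \<phi>"
  shows "induces_aut V' E' pos ar h (restr_aut V' \<phi>)
         \<and> h ` spatial_image V' E' pos ar = spatial_image V' E' pos ar"
proof -
  let ?\<psi> = "restr_aut V' \<phi>"
  have ga: "graph_aut V E \<phi>" using ind unfolding induces_aut_def by blast
  have V'V: "V' \<subseteq> V" and E'E: "E' \<subseteq> E" and eV': "\<forall>e\<in>E'. e \<subseteq> V'"
    using sub unfolding subgraph_def by auto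
  have iV': "\<phi> ` V' = V'" and iE': "(\<lambda>e. \<phi> ` e) ` E' = E'" using inv ga by auto
  have injV: "inj_on \<phi> V" using ga unfolding graph_aut_def bij_betw_def by blast
  have injV': "inj_on \<phi> V'" using injV V'V inj_on_subset by blast
  have psi_img: "?\<psi> ` e = \<phi> ` e" if "e \<subseteq> V'" for e
    using that unfolding restr_aut_def by auto
  have "bij_betw ?\<psi> V' V'"
  proof -
    have "bij_betw \<phi> V' V'" using injV' iV' by (simp add: bij_betw_def)
    moreover have "\<And>x. x \<in> V' \<Longrightarrow> ?\<psi> x = \<phi> x" unfolding restr_aut_def by simp
    ultimately show ?thesis using bij_betw_cong by (metis (no_types, lifting))
  qed
  moreover have "\<forall>x. x \<notin> V' \<longrightarrow> ?\<psi> x = x" unfolding restr_aut_def by simp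
  moreover have "\<forall>e. e \<subseteq> V' \<longrightarrow> (?\<psi> ` e \<in> E' \<longleftrightarrow> e \<in> E')"
  proof (intro allI impI)
    fix e assume e: "e \<subseteq> V'"
    show "?\<psi> ` e \<in> E' \<longleftrightarrow> e \<in> E'"
    proof
      assume "?\<psi> ` e \<in> E'"
      then have "\<phi> ` e \<in> (\<lambda>e. \<phi> ` e) ` E'" using psi_img[OF e] iE' by simp
      then obtain e0 where e0: "e0 \<in> E'" "\<phi> ` e = \<phi> ` e0" by auto
      have "e0 \<subseteq> V" using e0 eV' V'V by blast
      moreover have "e \<subseteq> V" using e V'V by blast
      ultimately have "e = e0" using e0(2) injV by (simp add: inj_on_image_eq_iff)
      then show "e \<in> E'" using e0 by simp
    next
      assume "e \<in> E'"
      then have "\<phi> ` e \<in> E'" using iE' by blast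
      then show "?\<psi> ` e \<in> E'" using psi_img[OF e] by simp
    qed
  qed
  ultimately have gaV': "graph_aut V' E' ?\<psi>" unfolding graph_aut_def by blast
  have vert: "\<forall>v\<in>V'. h (pos v) = pos (?\<psi> v)"
    using ind V'V unfolding induces_aut_def restr_aut_def by auto
  have edge: "\<forall>e\<in>E'. h ` arc_img (ar e) = arc_img (ar (?\<psi> ` e))"
  proof
    fix e assume e: "e \<in> E'"
    then have "h ` arc_img (ar e) = arc_img (ar (\<phi> ` e))" using ind E'E unfolding induces_aut_def by blast
    then show "h ` arc_img (ar e) = arc_img (ar (?\<psi> ` e))" using psi_img eV' e by simp
  qed
  have hv: "h ` pos ` V' = pos ` (\<phi> ` V')"
  proof -
    have "h ` pos ` V' = (\<lambda>v. h (pos v)) ` V'" by (simp add: image_image)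
    also have "... = (\<lambda>v. pos (\<phi> v)) ` V'"
      using ind V'V unfolding induces_aut_def by (intro image_cong) auto
    finally show ?thesis by (simp add: image_image)
  qed
  have he: "h ` (\<Union>e\<in>E'. arc_img (ar e)) = (\<Union>e\<in>E'. arc_img (ar (\<phi> ` e)))"
    unfolding image_UN using ind E'E unfolding induces_aut_def by (intro SUP_cong) (simp, blast)
  have "h ` spatial_image V' E' pos ar = pos ` (\<phi> ` V') \<union> (\<Union>e\<in>E'. arc_img (ar (\<phi> ` e)))"
    unfolding spatial_image_def image_Un hv he ..
  also have "(\<Union>e\<in>E'. arc_img (ar (\<phi> ` e))) = (\<Union>e\<in>(\<lambda>e. \<phi> ` e) ` E'. arc_img (ar e))"
    by (simp add: image_image)
  finally have "h ` spatial_image V' E' pos ar = spatial_image V' E' pos ar"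
    using iV' iE' unfolding spatial_image_def by simp
  then show ?thesis using gaV' vert edge unfolding induces_aut_def by blast
qed

theorem mainTheorem3:
  fixes V V' :: "'v set" and E E' :: "'v set set"
    and pos :: "'v \<Rightarrow> nat \<Rightarrow> real" and ar :: "'v set \<Rightarrow> real \<Rightarrow> nat \<Rightarrow> real"
  assumes "finite_graph V E"
    and "subgraph V' E' V E"
    and "\<forall>\<phi>. graph_aut V E \<phi> \<longrightarrow> \<phi> ` V' = V' \<and> (\<lambda>e. \<phi> ` e) ` E' = E'"
    and "spatial_embedding V E pos ar"
  shows "restr_aut V' ` TSG V E pos ar \<subseteq> TSG V' E' pos ar
       \<and> restr_aut V' ` TSG_plus V E pos ar \<subseteq> TSG_plus V' E' pos ar"
  using key[OF assms(2) assms(3)] unfolding TSG_def TSG_plus_def by blast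

end
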